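(* Let $(X,d)$ be a nonempty homogeneous compact metric space of diameter $D$, and let $m$ be a Borel probability measure on $X$ that is invariant under all isometries of $X$. Let $A=\int_{X\times X} d(x,y)\,d(m\times m)(x,y)$ and let $\mu = 1-(m\times m)(\Delta)$, where $\Delta=\{(x,x):x\in X\}$ is the diagonal. Then $$\frac{D}{2}\le A\le \mu D.$$ Furthermore, $\mu=1$ if every point of $X$ has $m$-measure zero, and $\mu=1-\frac1n$ if $X$ is finite with $|X|=n$.
   Context: A metric space is homogeneous if its isometry group acts transitively on its points. The diameter is $D=\sup_{x,y\in X} d(x,y)$. *)

theory Defs
  imports "HOL-Analysis.Analysis" "HOL-Probability.Probability"
begin

definition isometry :: "('a::metric_space \<Rightarrow> 'a) \<Rightarrow> bool" where
  "isometry f \<longleftrightarrow> bij f \<and> (\<forall>x y. dist (f x) (f y) = dist x y)"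

definition homogeneous_space :: "'a::metric_space itself \<Rightarrow> bool" where
  "homogeneous_space _ \<longleftrightarrow> (\<forall>x y::'a. \<exists>f. isometry f \<and> f x = y)"

end

theory Submission
  imports Defs
begin

lemma countable_dense:
  assumes "compact (UNIV :: 'a::metric_space set)"
  obtains C :: "'a::metric_space set" where "countable C" "C \<noteq> {}" "\<And>x e. e > 0 \<Longrightarrow> \<exists>c\<in>C. dist x c < e"
proof -
  have ex: "\<exists>K::'a set. finite K \<and> UNIV \<subseteq> (\<Union>c\<in>K. ball c (inverse (real (Suc n))))" for n
  proof -
    let ?r = "inverse (real (Suc n))"
    have cov: "(UNIV::'a set) \<subseteq> (\<Union>c\<in>UNIV. ball c ?r)" by (auto intro!: exI)
    have opn: "\<And>T. T \<in> (UNIV::'a set) \<Longrightarrow> open (ball T ?r)" by simp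
    obtain K :: "'a set" where "K \<subseteq> UNIV" "finite K" "UNIV \<subseteq> (\<Union>c\<in>K. ball c ?r)"
      by (rule compactE_image[OF assms opn cov])
    then show ?thesis by blast
  qed
  from choice[OF allI[OF ex]] obtain K :: "nat \<Rightarrow> 'a set" where K0: "\<forall>n. finite (K n) \<and> UNIV \<subseteq> (\<Union>c\<in>K n. ball c (inverse (real (Suc n))))"
    ..
  have K: "\<And>n. finite (K n)" "\<And>n. UNIV \<subseteq> (\<Union>c\<in>K n. ball c (inverse (real (Suc n))))"
    using K0 by blast+
  define C where "C = (\<Union>n. K n)"
  have "countable C" unfolding C_def by (intro countable_UN) (auto intro: countable_finite K(1))
  moreover have dense: "\<exists>c\<in>C. dist x c < e" if e: "e > 0" for x e
  proof -
    obtain n :: nat where n: "inverse (real (Suc n)) < e" using reals_Archimedean[OF e] by blast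
    from K(2)[of n] obtain c where c: "c \<in> K n" "x \<in> ball c (inverse (real (Suc n)))" by blast
    have "c \<in> C" using c(1) unfolding C_def by blast
    moreover have "dist x c < e" using c(2) n by (simp add: dist_commute)
    ultimately show ?thesis by blast
  qed
  moreover have "C \<noteq> {}" using dense[of 1] by force
  ultimately show ?thesis using that by blast
qed

lemma dist_INF:
  fixes C :: "'a::metric_space set"
  assumes "C \<noteq> {}" "\<And>x e. e > 0 \<Longrightarrow> \<exists>c\<in>C. dist x c < e"
  shows "dist x y = (INF c\<in>C. dist x c + dist c y)"
proof (rule antisym)
  show "dist x y \<le> (INF c\<in>C. dist x c + dist c y)"
    using assms(1) by (intro cINF_greatest) (auto intro: dist_triangle)
  have bdd: "bdd_below ((\<lambda>c. dist x c + dist c y) ` C)"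
    by (rule bdd_belowI[of _ 0]) auto
  show "(INF c\<in>C. dist x c + dist c y) \<le> dist x y"
  proof (rule field_le_epsilon)
    fix e :: real assume e: "e > 0"
    then obtain c where c: "c \<in> C" "dist y c < e / 2" using assms(2)[of "e/2" y] by auto
    have "(INF c\<in>C. dist x c + dist c y) \<le> dist x c + dist c y"
      by (rule cINF_lower[OF bdd c(1)])
    also have "\<dots> \<le> dist x y + 2 * dist y c"
      using dist_triangle[of x c y] by (simp add: dist_commute)
    finally show "(INF c\<in>C. dist x c + dist c y) \<le> dist x y + e" using c by simp
  qed
qed


lemma dist_measurable:
  assumes "compact (UNIV :: 'a::metric_space set)"
  shows "(\<lambda>p. dist (fst p) (snd p :: 'a)) \<in> borel_measurable (borel \<Otimes>\<^sub>M borel)"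
proof -
  obtain C :: "'a set" where C: "countable C" "C \<noteq> {}" "\<And>x e. e > 0 \<Longrightarrow> \<exists>c\<in>C. dist x c < e"
    using countable_dense[OF assms] by blast
  have eq: "(\<lambda>p. dist (fst p) (snd p :: 'a)) = (\<lambda>p. INF c\<in>C. dist (fst p) c + dist c (snd p))"
    by (intro ext) (rule dist_INF[OF C(2,3)])
  have m1: "(\<lambda>x::'a. dist x c) \<in> borel_measurable borel" for c
    by (intro borel_measurable_continuous_onI continuous_intros)
  have m2: "(\<lambda>x::'a. dist c x) \<in> borel_measurable borel" for c
    by (intro borel_measurable_continuous_onI continuous_intros)
  have "(\<lambda>p. dist (fst p) c + dist c (snd p :: 'a)) \<in> borel_measurable (borel \<Otimes>\<^sub>M borel)" for c
    using measurable_compose[OF measurable_fst m1[of c]] measurable_compose[OF measurable_snd m2[of c]]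
    by (intro borel_measurable_add) (auto simp: o_def)
  then show ?thesis unfolding eq
    by (intro borel_measurable_cINF_real C(1))
qed



theorem theorem1p2:
  fixes m :: "'a::metric_space measure"
  assumes compact: "compact (UNIV :: 'a set)"
    and homog: "homogeneous_space TYPE('a)"
    and prob: "prob_space m"
    and borel: "sets m = sets borel"
    and invariant: "\<And>f A. isometry f \<Longrightarrow> A \<in> sets m \<Longrightarrow> emeasure m (f -` A) = emeasure m A"
  defines "D \<equiv> diameter (UNIV :: 'a set)"
    and "A \<equiv> integral\<^sup>L (m \<Otimes>\<^sub>M m) (\<lambda>(x, y). dist x y)"
    and "\<mu> \<equiv> 1 - measure (m \<Otimes>\<^sub>M m) {(x, x) | x. True}"
  shows "(D / 2 \<le> A \<and> A \<le> \<mu> * D)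
    \<and> ((\<forall>x. measure m {x} = 0) \<longrightarrow> \<mu> = 1)
    \<and> (finite (UNIV :: 'a set) \<longrightarrow> \<mu> = 1 - 1 / real (card (UNIV :: 'a set)))"
proof -
  interpret m: prob_space m by (rule prob)
  interpret P: pair_prob_space m m by unfold_locales
  have space_m: "space m = UNIV" using sets_eq_imp_space_eq[OF borel] by simp
  have sets_P: "sets (m \<Otimes>\<^sub>M m) = sets (borel \<Otimes>\<^sub>M borel)"
    by (rule sets_pair_measure_cong[OF borel borel])
  have space_P: "space (m \<Otimes>\<^sub>M m) = UNIV" by (simp add: space_pair_measure space_m)
  have dmeas: "(\<lambda>p. dist (fst p) (snd p)) \<in> borel_measurable (m \<Otimes>\<^sub>M m)"
    using dist_measurable[OF compact] measurable_cong_sets[OF sets_P refl] by blast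
  have bnd: "bounded (UNIV::'a set)" by (rule compact_imp_bounded[OF compact])
  have dD: "dist x y \<le> D" for x y :: 'a unfolding D_def by (rule diameter_bounded_bound[OF bnd]) auto
  have cd: "(\<lambda>(x,y). dist x y) = (\<lambda>p. dist (fst p) (snd p :: 'a))" by auto
  have intP: "integrable (m \<Otimes>\<^sub>M m) (\<lambda>(x,y). dist x y)"
    unfolding cd by (rule P.integrable_const_bound[where B=D]) (auto simp: dD dmeas)
  have mx: "(\<lambda>y. dist x y) \<in> borel_measurable m" for x :: 'a
  proof -
    have "(\<lambda>y. dist x y) \<in> borel_measurable borel"
      by (intro borel_measurable_continuous_onI continuous_intros)
    then show ?thesis using measurable_cong_sets[OF borel refl] by blast
  qed
  have intx: "integrable m (\<lambda>y. dist x y)" for x :: 'a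
    by (rule m.integrable_const_bound[where B=D]) (auto simp: dD mx)
  define F where "F x = (\<integral>y. dist x y \<partial>m)" for x
  have Finv: "F (g x) = F x" if g: "isometry g" for g x
  proof -
    have gd: "dist (g x) (g y) = dist x y" for x y using g unfolding isometry_def by blast
    have "continuous_on UNIV g"
      unfolding continuous_on_iff by (metis gd)
    then have "g \<in> borel_measurable borel" by (rule borel_measurable_continuous_onI)
    then have gm: "g \<in> measurable m m" using measurable_cong_sets[OF borel borel] by blast
    have dis: "distr m m g = m"
    proof (rule measure_eqI)
      show "sets (distr m m g) = sets m" by simp
      fix X assume "X \<in> sets (distr m m g)"
      then have X: "X \<in> sets m" by simp
      show "emeasure (distr m m g) X = emeasure m X"
        using emeasure_distr[OF gm X] invariant[OF g X] by (simp add: space_m)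
    qed
    have "F (g x) = (\<integral>y. dist (g x) y \<partial>(distr m m g))" unfolding F_def dis ..
    also have "\<dots> = (\<integral>y. dist (g x) (g y) \<partial>m)"
      by (rule integral_distr[OF gm mx])
    also have "\<dots> = F x" unfolding F_def gd ..
    finally show ?thesis .
  qed
  define c where "c = F undefined"
  have Fc: "F x = c" for x
  proof -
    obtain g where "isometry g" "g undefined = x"
      using homog unfolding homogeneous_space_def by blast
    then show ?thesis unfolding c_def using Finv by metis
  qed
  have d2c: "dist p q \<le> 2 * c" for p q :: 'a
  proof -
    have "dist p q = (\<integral>y. dist p q \<partial>m)" using m.prob_space by simp
    also have "\<dots> \<le> (\<integral>y. dist p y + dist q y \<partial>m)"
      by (rule integral_mono) (auto intro: intx dist_triangle2)
    also have "\<dots> = F p + F q" unfolding F_def by (rule Bochner_Integration.integral_add[OF intx intx])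
    finally show ?thesis by (simp add: Fc)
  qed
  have D2c: "D \<le> 2 * c"
    unfolding D_def diameter_def using d2c by (auto intro!: cSUP_least)
  have Ac: "A = c"
  proof -
    have "A = (\<integral>x. (\<integral>y. (\<lambda>(x,y). dist x y) (x, y) \<partial>m) \<partial>m)"
      unfolding A_def by (rule P.integral_fst'[OF intP, symmetric])
    also have "\<dots> = (\<integral>x. c \<partial>m)" using Fc unfolding F_def by simp
    also have "\<dots> = c" using m.prob_space by simp
    finally show ?thesis .
  qed
  let ?Dg = "{(x, x) | x::'a. True}"
  have Dg_eq: "?Dg = (\<lambda>p. dist (fst p) (snd p)) -` {0} \<inter> space (m \<Otimes>\<^sub>M m)"
    by (auto simp: space_P)
  have Dg: "?Dg \<in> sets (m \<Otimes>\<^sub>M m)"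
    unfolding Dg_eq by (rule measurable_sets[OF dmeas]) simp
  have part1: "A \<le> \<mu> * D"
  proof -
    have le: "(\<lambda>(x,y). dist x y) p \<le> D - D * indicator ?Dg p" for p :: "'a \<times> 'a"
      using dD by (cases p) (auto simp: indicator_def)
    have intI: "integrable (m \<Otimes>\<^sub>M m) (indicator ?Dg :: 'a \<times> 'a \<Rightarrow> real)"
      by (rule integrable_real_indicator[OF Dg]) (simp add: P.emeasure_finite less_top[symmetric])
    have "A \<le> (\<integral>p. D - D * indicator ?Dg p \<partial>(m \<Otimes>\<^sub>M m))"
    proof -
      have "integrable (m \<Otimes>\<^sub>M m) (\<lambda>p. D - D * indicator ?Dg p)"
        using intI by simp
      then show ?thesis unfolding A_def by (rule integral_mono[OF intP]) (rule le)
    qed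
    also have "\<dots> = D - D * measure (m \<Otimes>\<^sub>M m) ?Dg"
      using intI Dg P.prob_space by (simp add: space_P)
    finally show ?thesis unfolding \<mu>_def by (simp add: algebra_simps)
  qed
  have emDg: "emeasure (m \<Otimes>\<^sub>M m) ?Dg = (\<integral>\<^sup>+x. emeasure m {x} \<partial>m)"
  proof -
    have "emeasure (m \<Otimes>\<^sub>M m) ?Dg = (\<integral>\<^sup>+x. emeasure m (Pair x -` ?Dg) \<partial>m)"
      by (rule m.emeasure_pair_measure_alt[OF Dg])
    also have "\<dots> = (\<integral>\<^sup>+x. emeasure m {x} \<partial>m)"
      by (rule nn_integral_cong) auto
    finally show ?thesis .
  qed
  have sing: "{x} \<in> sets m" for x :: 'a
    unfolding borel by (rule borel_closed) simp
  have part2: "\<mu> = 1" if z: "\<forall>x. measure m {x} = 0"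
  proof -
    have "emeasure m {x} = 0" for x using z m.emeasure_eq_measure by simp
    then have "emeasure (m \<Otimes>\<^sub>M m) ?Dg = 0" unfolding emDg by simp
    then show ?thesis unfolding \<mu>_def by (simp add: measure_def)
  qed
  have part3: "\<mu> = 1 - 1 / real (card (UNIV :: 'a set))" if fin: "finite (UNIV :: 'a set)"
  proof -
    define a where "a = measure m {undefined}"
    have ma: "measure m {x} = a" for x
    proof -
      obtain g where g: "isometry g" "g undefined = x"
        using homog unfolding homogeneous_space_def by blast
      have "inj g" using g(1) unfolding isometry_def bij_def by blast
      then have "g -` {x} = {undefined}" using g(2) by (auto dest: injD)
      then have "emeasure m {undefined} = emeasure m {x}" using invariant[OF g(1) sing[of x]] by simp
      then show ?thesis unfolding a_def measure_def by simp
    qed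
    have "1 = measure m UNIV" using m.prob_space space_m by simp
    also have "\<dots> = (\<Sum>x\<in>UNIV. measure m {x})"
      by (rule m.finite_measure_eq_sum_singleton[OF fin sing])
    also have "\<dots> = real (card (UNIV :: 'a set)) * a" by (simp add: ma)
    finally have a1: "1 = real (card (UNIV :: 'a set)) * a" .
    have a0: "0 \<le> a" unfolding a_def by simp
    have "emeasure (m \<Otimes>\<^sub>M m) ?Dg = ennreal a"
      unfolding emDg using m.emeasure_eq_measure ma m.emeasure_space_1 by simp
    then have "measure (m \<Otimes>\<^sub>M m) ?Dg = a" using a0 by (simp add: measure_def)
    moreover have "a = 1 / real (card (UNIV :: 'a set))"
      using a1 by (metis mult_eq_0_iff nonzero_mult_div_cancel_left zero_neq_one div_by_1)
    ultimately show ?thesis unfolding \<mu>_def by simp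
  qed
  show ?thesis using part1 part2 part3 D2c Ac by auto
qed


end
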